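(* Let $(X,\sigma,T)$ be as in the context, $x\in eX$, $\xi\in X_{eq}$ and $f_1,f_2\in L$. (1) If $\xi$ is regular, then $(f_1,f_2)\in R^{\xi-\pi_{eq}(x)}_{\mathrm{ev}_x}$ if and only if $(ef_1)^{-1}f_2\in\mathrm{stab}_{\mathcal G}(x)$ and $\tilde\pi_{eq}(f_1)=\tilde\pi_{eq}(f_2)=\xi-\pi_{eq}(x)$. (2) If every point of $\pi_{eq}^{-1}(\xi)$ separates the idempotents of $L$, then $(f_1,f_2)\in R^{\xi-\pi_{eq}(x)}_{\mathrm{ev}_x}$ if and only if $(ef_1)^{-1}f_2\in\mathrm{stab}_{\mathcal G}(x)$, $f_1^0=f_2^0$ and $\tilde\pi_{eq}(f_1)=\tilde\pi_{eq}(f_2)=\xi-\pi_{eq}(x)$.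
   Context: $T$ abelian group acting continuously, minimally and non-distally by $\sigma$ on a compact Hausdorff space $X$. $E(X)$: Ellis semigroup (closure of $\{\sigma^t\}$ in $X^X$). $\pi_{eq}:X\to X_{eq}$: maximal equicontinuous factor ($X_{eq}$ a compact abelian group). Points $x,y$ are proximal if $f(x)=f(y)$ for some $f\in E(X)$; $\xi\in X_{eq}$ is singular if $\pi_{eq}^{-1}(\xi)$ contains two distinct proximal points, regular otherwise. Fix a minimal idempotent $e$, $L=E(X)e$, $\mathcal G=eL$ (a group with identity $e$; $g^{-1}$ denotes the group inverse), $\mathrm{stab}_{\mathcal G}(x)=\{g\in\mathcal G: g(x)=x\}$. For $f\in L$, $f^{-1}$ is its unique normal inverse in the completely simple semigroup $L$ and $f^0=f^{-1}f$. A point separates the idempotents of $L$ if evaluation at it is injective on the set of idempotents of $L$. $\tilde\pi_{eq}(f)=\pi_{eq}(f(y))-\pi_{eq}(y)$ (independent of $y$). $R^\zeta_{\mathrm{ev}_x}=\{(f_1,f_2)\in L\times L: f_1(x)=f_2(x),\ \tilde\pi_{eq}(f_i)=\zeta,\ i=1,2\}$. *)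

theory Defs
  imports "HOL-Analysis.Analysis"
begin

text \<open>Setting: an abelian group 't acts on the compact Hausdorff space of type 'x
by the maps sigma t (composition is the semigroup product: f g = f o g).
The space of maps 'x => 'x carries the product (pointwise) topology
(instance from Function_Topology).\<close>

definition is_action :: "('t::ab_group_add \<Rightarrow> 'x::topological_space \<Rightarrow> 'x) \<Rightarrow> bool" where
  "is_action \<sigma> \<longleftrightarrow> \<sigma> 0 = id \<and> (\<forall>s t. \<sigma> (s + t) = \<sigma> s \<circ> \<sigma> t)
     \<and> (\<forall>t. continuous_on UNIV (\<sigma> t))"

definition ellis :: "('t \<Rightarrow> 'x::topological_space \<Rightarrow> 'x) \<Rightarrow> ('x \<Rightarrow> 'x) set" where
  "ellis \<sigma> = closure (range \<sigma>)"

definition minimal_action :: "('t \<Rightarrow> 'x::topological_space \<Rightarrow> 'x) \<Rightarrow> bool" where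
  "minimal_action \<sigma> \<longleftrightarrow> (\<forall>x. closure (range (\<lambda>t. \<sigma> t x)) = UNIV)"

definition proximal :: "('t \<Rightarrow> 'x::topological_space \<Rightarrow> 'x) \<Rightarrow> 'x \<Rightarrow> 'x \<Rightarrow> bool" where
  "proximal \<sigma> x y \<longleftrightarrow> (\<exists>f\<in>ellis \<sigma>. f x = f y)"

definition distal_action :: "('t \<Rightarrow> 'x::topological_space \<Rightarrow> 'x) \<Rightarrow> bool" where
  "distal_action \<sigma> \<longleftrightarrow> (\<forall>x y. proximal \<sigma> x y \<longrightarrow> x = y)"

text \<open>Factors of X correspond to closed invariant equivalence relations R on X
(the factor being X/R).  The open neighbourhoods of the diagonal of the compact
Hausdorff space X/R (i.e. the open entourages of its unique uniformity) are exactly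
the images of the open R-saturated subsets of X \<times> X containing R.  Hence the
induced action on X/R is equicontinuous iff the following holds.\<close>

definition closed_inv_equiv :: "('t \<Rightarrow> 'x::topological_space \<Rightarrow> 'x) \<Rightarrow> ('x \<times> 'x) set \<Rightarrow> bool" where
  "closed_inv_equiv \<sigma> R \<longleftrightarrow> equiv UNIV R \<and> closed R \<and>
     (\<forall>t x y. (x, y) \<in> R \<longrightarrow> (\<sigma> t x, \<sigma> t y) \<in> R)"

definition sat_nbhd :: "('x::topological_space \<times> 'x) set \<Rightarrow> ('x \<times> 'x) set \<Rightarrow> bool" where
  "sat_nbhd R W \<longleftrightarrow> open W \<and> R \<subseteq> W \<and>
     (\<forall>a b a' b'. (a, b) \<in> W \<longrightarrow> (a, a') \<in> R \<longrightarrow> (b, b') \<in> R \<longrightarrow> (a', b') \<in> W)"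

definition equicontinuous_factor_rel :: "('t \<Rightarrow> 'x::topological_space \<Rightarrow> 'x) \<Rightarrow> ('x \<times> 'x) set \<Rightarrow> bool" where
  "equicontinuous_factor_rel \<sigma> R \<longleftrightarrow> closed_inv_equiv \<sigma> R \<and>
     (\<forall>W. sat_nbhd R W \<longrightarrow> (\<exists>W'. sat_nbhd R W' \<and>
        (\<forall>t a b. (a, b) \<in> W' \<longrightarrow> (\<sigma> t a, \<sigma> t b) \<in> W)))"

text \<open>pi is the maximal equicontinuous factor map onto the compact (Hausdorff) abelian
group 'g, on which T acts by rotations: pi is a continuous equivariant surjection,
and its fibre relation is contained in the relation of every equicontinuous factor
(i.e. every equicontinuous factor factors through pi).\<close>
definition is_MEF :: "('t \<Rightarrow> 'x::topological_space \<Rightarrow> 'x) \<Rightarrow> ('x \<Rightarrow> 'g::{topological_ab_group_add, t2_space}) \<Rightarrow> bool" where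
  "is_MEF \<sigma> \<pi> \<longleftrightarrow> compact (UNIV :: 'g set) \<and> continuous_on UNIV \<pi> \<and> surj \<pi> \<and>
     (\<exists>\<alpha> :: 't \<Rightarrow> 'g. \<forall>t x. \<pi> (\<sigma> t x) = \<pi> x + \<alpha> t) \<and>
     (\<forall>R. equicontinuous_factor_rel \<sigma> R \<longrightarrow> {(x, y). \<pi> x = \<pi> y} \<subseteq> R)"

definition singular_pt :: "('t \<Rightarrow> 'x::topological_space \<Rightarrow> 'x) \<Rightarrow> ('x \<Rightarrow> 'g) \<Rightarrow> 'g \<Rightarrow> bool" where
  "singular_pt \<sigma> \<pi> \<xi> \<longleftrightarrow> (\<exists>y z. \<pi> y = \<xi> \<and> \<pi> z = \<xi> \<and> y \<noteq> z \<and> proximal \<sigma> y z)"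

definition regular_pt :: "('t \<Rightarrow> 'x::topological_space \<Rightarrow> 'x) \<Rightarrow> ('x \<Rightarrow> 'g) \<Rightarrow> 'g \<Rightarrow> bool" where
  "regular_pt \<sigma> \<pi> \<xi> \<longleftrightarrow> \<not> singular_pt \<sigma> \<pi> \<xi>"

text \<open>pi-tilde(f) = pi(f y) - pi(y); by assumption of the paper independent of y,
so we evaluate at an arbitrary fixed point.\<close>
definition pi_tilde :: "('x \<Rightarrow> 'g::ab_group_add) \<Rightarrow> ('x \<Rightarrow> 'x) \<Rightarrow> 'g" where
  "pi_tilde \<pi> f = \<pi> (f undefined) - \<pi> undefined"

definition left_ideal :: "('x \<Rightarrow> 'x) set \<Rightarrow> ('x \<Rightarrow> 'x) set \<Rightarrow> bool" where
  "left_ideal E I \<longleftrightarrow> I \<noteq> {} \<and> I \<subseteq> E \<and> (\<forall>f\<in>E. \<forall>g\<in>I. f \<circ> g \<in> I)"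

definition minimal_left_ideal :: "('x \<Rightarrow> 'x) set \<Rightarrow> ('x \<Rightarrow> 'x) set \<Rightarrow> bool" where
  "minimal_left_ideal E I \<longleftrightarrow> left_ideal E I \<and> (\<forall>J. left_ideal E J \<longrightarrow> J \<subseteq> I \<longrightarrow> J = I)"

definition minimal_idempotent :: "('x \<Rightarrow> 'x) set \<Rightarrow> ('x \<Rightarrow> 'x) \<Rightarrow> bool" where
  "minimal_idempotent E e \<longleftrightarrow> e \<circ> e = e \<and> (\<exists>I. minimal_left_ideal E I \<and> e \<in> I)"

definition Lset :: "('x \<Rightarrow> 'x) set \<Rightarrow> ('x \<Rightarrow> 'x) \<Rightarrow> ('x \<Rightarrow> 'x) set" where
  "Lset E e = (\<lambda>f. f \<circ> e) ` E"

definition Gset :: "('x \<Rightarrow> 'x) set \<Rightarrow> ('x \<Rightarrow> 'x) \<Rightarrow> ('x \<Rightarrow> 'x) set" where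
  "Gset E e = (\<lambda>f. e \<circ> f) ` Lset E e"

definition Ginv :: "('x \<Rightarrow> 'x) set \<Rightarrow> ('x \<Rightarrow> 'x) \<Rightarrow> ('x \<Rightarrow> 'x) \<Rightarrow> ('x \<Rightarrow> 'x)" where
  "Ginv E e g = (THE h. h \<in> Gset E e \<and> g \<circ> h = e \<and> h \<circ> g = e)"

text \<open>Unique normal inverse of f in the completely simple semigroup L,
and f^0 = f^-1 f.\<close>
definition Linv :: "('x \<Rightarrow> 'x) set \<Rightarrow> ('x \<Rightarrow> 'x) \<Rightarrow> ('x \<Rightarrow> 'x)" where
  "Linv L f = (THE h. h \<in> L \<and> f \<circ> h \<circ> f = f \<and> h \<circ> f \<circ> h = h \<and> f \<circ> h = h \<circ> f)"

definition Lzero :: "('x \<Rightarrow> 'x) set \<Rightarrow> ('x \<Rightarrow> 'x) \<Rightarrow> ('x \<Rightarrow> 'x)" where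
  "Lzero L f = Linv L f \<circ> f"

definition stabG :: "('x \<Rightarrow> 'x) set \<Rightarrow> ('x \<Rightarrow> 'x) \<Rightarrow> 'x \<Rightarrow> ('x \<Rightarrow> 'x) set" where
  "stabG E e x = {g \<in> Gset E e. g x = x}"

definition separates_idempotents :: "('x \<Rightarrow> 'x) set \<Rightarrow> 'x \<Rightarrow> bool" where
  "separates_idempotents L y \<longleftrightarrow> inj_on (\<lambda>u. u y) {u \<in> L. u \<circ> u = u}"

definition Rev :: "('x \<Rightarrow> 'g::ab_group_add) \<Rightarrow> ('x \<Rightarrow> 'x) set \<Rightarrow> 'g \<Rightarrow> 'x
                   \<Rightarrow> (('x \<Rightarrow> 'x) \<times> ('x \<Rightarrow> 'x)) set" where
  "Rev \<pi> L \<zeta> x = {(f1, f2). f1 \<in> L \<and> f2 \<in> L \<and> f1 x = f2 x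
                      \<and> pi_tilde \<pi> f1 = \<zeta> \<and> pi_tilde \<pi> f2 = \<zeta>}"

end

theory Submission
  imports Defs
begin

lemma cont_rcomp: "continuous_on UNIV (\<lambda>f::'x::topological_space \<Rightarrow> 'x. f \<circ> g)"
  by (rule continuous_on_coordinatewise_then_product) (simp add: o_def)

lemma cont_lcomp:
  assumes "continuous_on UNIV (h::'x::topological_space \<Rightarrow> 'x)"
  shows "continuous_on UNIV (\<lambda>f::'x \<Rightarrow> 'x. h \<circ> f)"
proof (rule continuous_on_coordinatewise_then_product)
  fix i
  show "continuous_on UNIV (\<lambda>f::'x\<Rightarrow>'x. (h \<circ> f) i)"
    unfolding o_def
    using continuous_on_compose2[OF assms continuous_on_product_coordinates[of i]] by simp
qed

lemma ellis_lcomp: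
  assumes act: "is_action \<sigma>" and f: "f \<in> ellis \<sigma>"
  shows "\<sigma> t \<circ> f \<in> ellis \<sigma>"
proof -
  have c: "continuous_on UNIV (\<sigma> t)" using act unfolding is_action_def by blast
  have "(\<lambda>f. \<sigma> t \<circ> f) ` closure (range \<sigma>) \<subseteq> closure (range \<sigma>)"
  proof (rule image_closure_subset)
    show "continuous_on (closure (range \<sigma>)) (\<lambda>f. \<sigma> t \<circ> f)"
      using cont_lcomp[OF c] continuous_on_subset by blast
    show "(\<lambda>f. \<sigma> t \<circ> f) ` range \<sigma> \<subseteq> closure (range \<sigma>)"
    proof
      fix y assume "y \<in> (\<lambda>f. \<sigma> t \<circ> f) ` range \<sigma>"
      then obtain s where "y = \<sigma> t \<circ> \<sigma> s" by auto
      then have "y = \<sigma> (t + s)" using act unfolding is_action_def by simp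
      then show "y \<in> closure (range \<sigma>)" by (intro subsetD[OF closure_subset]) simp
    qed
  qed simp
  then show ?thesis using f unfolding ellis_def by blast
qed

lemma ellis_comp:
  assumes act: "is_action \<sigma>" and f: "f \<in> ellis \<sigma>" and g: "g \<in> ellis \<sigma>"
  shows "f \<circ> g \<in> ellis \<sigma>"
proof -
  have "(\<lambda>f. f \<circ> g) ` closure (range \<sigma>) \<subseteq> closure (range \<sigma>)"
  proof (rule image_closure_subset)
    show "continuous_on (closure (range \<sigma>)) (\<lambda>f. f \<circ> g)"
      using cont_rcomp continuous_on_subset by blast
    show "(\<lambda>f. f \<circ> g) ` range \<sigma> \<subseteq> closure (range \<sigma>)"
      using ellis_lcomp[OF act g] unfolding ellis_def by auto
  qed simp
  then show ?thesis using f unfolding ellis_def by blast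
qed

lemma pi_shift:
  fixes \<pi> :: "'x::topological_space \<Rightarrow> 'g::{topological_ab_group_add, t2_space}"
  assumes mef: "is_MEF \<sigma> \<pi>" and f: "f \<in> ellis \<sigma>"
  shows "\<pi> (f y) = \<pi> y + pi_tilde \<pi> f"
proof -
  obtain \<alpha> where al: "\<And>t x. \<pi> (\<sigma> t x) = \<pi> x + \<alpha> t" using mef unfolding is_MEF_def by blast
  have cp: "continuous_on UNIV \<pi>" using mef unfolding is_MEF_def by blast
  define F where "F = (\<lambda>f::'x\<Rightarrow>'x. (\<pi> (f y) - \<pi> y) - (\<pi> (f undefined) - \<pi> undefined))"
  have cF: "continuous_on UNIV F" unfolding F_def
    by (intro continuous_intros continuous_on_compose2[OF cp continuous_on_product_coordinates]) auto
  have c1: "continuous_on (closure (range \<sigma>)) F" using cF continuous_on_subset by blast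
  have c2: "\<And>g. g \<in> range \<sigma> \<Longrightarrow> F g = 0" unfolding F_def using al by auto
  have c3: "f \<in> closure (range \<sigma>)" using f unfolding ellis_def .
  have "F f = 0" using continuous_constant_on_closure[of "range \<sigma>" F 0 f, OF c1 c2 c3] .
  then show ?thesis unfolding F_def pi_tilde_def by (simp add: algebra_simps)
qed

locale ES =
  fixes E :: "('x \<Rightarrow> 'x) set" and e :: "'x \<Rightarrow> 'x"
  assumes comp: "\<And>f g. f \<in> E \<Longrightarrow> g \<in> E \<Longrightarrow> f \<circ> g \<in> E"
    and eE: "e \<in> E" and idem: "e \<circ> e = e" and mi: "minimal_idempotent E e"
begin

abbreviation "L \<equiv> Lset E e"
abbreviation "G \<equiv> Gset E e"

lemma L_sub: "f \<in> L \<Longrightarrow> f \<in> E" unfolding Lset_def using comp eE by auto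
lemma L_re: "f \<in> L \<Longrightarrow> f \<circ> e = f" unfolding Lset_def using idem by (auto simp: comp_assoc)
lemma L_left: "k \<in> E \<Longrightarrow> f \<in> L \<Longrightarrow> k \<circ> f \<in> L"
  unfolding Lset_def using comp by (auto simp: comp_assoc[symmetric])
lemma eL: "e \<in> L" unfolding Lset_def using idem eE by (metis image_eqI)
lemma LL: "f \<in> L \<Longrightarrow> g \<in> L \<Longrightarrow> f \<circ> g \<in> L" using L_left L_sub by blast

lemma L_min: "minimal_left_ideal E L"
proof -
  obtain I where I: "minimal_left_ideal E I" "e \<in> I" using mi unfolding minimal_idempotent_def by blast
  have li: "left_ideal E L" unfolding left_ideal_def using eL L_sub L_left by blast
  have "L \<subseteq> I" using I unfolding minimal_left_ideal_def left_ideal_def Lset_def by auto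
  then have "L = I" using I li unfolding minimal_left_ideal_def by blast
  then show ?thesis using I by simp
qed

lemma G_L: "g \<in> G \<Longrightarrow> g \<in> L" unfolding Gset_def using L_left eE by auto
lemma G_le: "g \<in> G \<Longrightarrow> e \<circ> g = g" unfolding Gset_def using idem by (auto simp: comp_assoc[symmetric])
lemma G_re: "g \<in> G \<Longrightarrow> g \<circ> e = g" using G_L L_re by blast
lemma eG: "e \<in> G" unfolding Gset_def using eL idem by (metis image_eqI)
lemma GL: "g \<in> G \<Longrightarrow> f \<in> L \<Longrightarrow> g \<circ> f \<in> G"
  unfolding Gset_def using LL by (auto simp: comp_assoc)
lemma e_L_G: "f \<in> L \<Longrightarrow> e \<circ> f \<in> G" unfolding Gset_def by auto

lemma left_inv: assumes g: "g \<in> G" shows "\<exists>h\<in>G. h \<circ> g = e"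
proof -
  define J where "J = (\<lambda>l. l \<circ> g) ` L"
  have gL: "g \<in> L" using G_L g .
  have JL: "J \<subseteq> L" unfolding J_def using LL gL by auto
  have "left_ideal E J" unfolding left_ideal_def J_def
  proof (intro conjI ballI)
    show "(\<lambda>l. l \<circ> g) ` L \<noteq> {}" using eL by auto
    show "(\<lambda>l. l \<circ> g) ` L \<subseteq> E" using LL gL L_sub by auto
  next
    fix f h assume "f \<in> E" "h \<in> (\<lambda>l. l \<circ> g) ` L"
    then obtain l where "l \<in> L" "h = l \<circ> g" by auto
    then show "f \<circ> h \<in> (\<lambda>l. l \<circ> g) ` L"
      using L_left[OF \<open>f \<in> E\<close> \<open>l \<in> L\<close>] by (metis comp_assoc image_eqI)
  qed
  then have "J = L" using L_min JL unfolding minimal_left_ideal_def by blast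
  then have "e \<in> (\<lambda>l. l \<circ> g) ` L" using eL unfolding J_def by simp
  then obtain l where l: "l \<in> L" "e = l \<circ> g" by blast
  have "e \<circ> l \<in> G" using e_L_G l(1) .
  moreover have "(e \<circ> l) \<circ> g = e" using l idem by (simp add: comp_assoc)
  ultimately show ?thesis by blast
qed

lemma two_inv: assumes g: "g \<in> G" shows "\<exists>h\<in>G. g \<circ> h = e \<and> h \<circ> g = e"
proof -
  obtain h where h: "h \<in> G" "h \<circ> g = e" using left_inv g by blast
  obtain k where k: "k \<in> G" "k \<circ> h = e" using left_inv h(1) by blast
  have "g \<circ> h = e \<circ> (g \<circ> h)" using G_le GL G_L g h(1) by metis
  also have "\<dots> = k \<circ> h \<circ> g \<circ> h" using k by (simp add: comp_assoc)
  also have "\<dots> = k \<circ> e \<circ> h" using h by (simp add: comp_assoc)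
  also have "\<dots> = e" using G_le h(1) k by (simp add: comp_assoc)
  finally show ?thesis using h by blast
qed

lemma Ginv: assumes g: "g \<in> G"
  shows "Ginv E e g \<in> G" "g \<circ> Ginv E e g = e" "Ginv E e g \<circ> g = e"
proof -
  obtain h where h: "h \<in> G" "g \<circ> h = e" "h \<circ> g = e" using two_inv g by blast
  have u: "h' = h" if "h' \<in> G" "g \<circ> h' = e" "h' \<circ> g = e" for h'
  proof -
    have "h' = h' \<circ> e" using G_re that(1) by simp
    also have "\<dots> = h' \<circ> g \<circ> h" using h by (simp add: comp_assoc)
    also have "\<dots> = h" using that(3) G_le h(1) by simp
    finally show ?thesis .
  qed
  have "Ginv E e g = h" unfolding Ginv_def
  proof (rule the_equality)
    show "h \<in> G \<and> g \<circ> h = e \<and> h \<circ> g = e" using h by simp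
    show "\<And>k. k \<in> G \<and> g \<circ> k = e \<and> k \<circ> g = e \<Longrightarrow> k = h" using u by simp
  qed
  then show "Ginv E e g \<in> G" "g \<circ> Ginv E e g = e" "Ginv E e g \<circ> g = e" using h by auto
qed

lemma Linv: assumes f: "f \<in> L"
  shows "Linv L f \<in> L \<and> f \<circ> Linv L f \<circ> f = f \<and> Linv L f \<circ> f \<circ> Linv L f = Linv L f
         \<and> f \<circ> Linv L f = Linv L f \<circ> f"
proof -
  define a where "a = e \<circ> f"
  have aG: "a \<in> G" unfolding a_def using e_L_G f .
  define g where "g = Ginv E e a"
  note gi = Ginv[OF aG, folded g_def]
  have fe: "f \<circ> e = f" using L_re f .
  have ge: "g \<circ> e = g" using G_re gi(1) .
  have eg: "e \<circ> g = g" using G_le gi(1) .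
  have gf: "g \<circ> f = e" using gi(3) ge unfolding a_def by (metis comp_assoc)
  define h where "h = f \<circ> g \<circ> g"
  have hL: "h \<in> L" unfolding h_def using LL f G_L gi(1) by (metis comp_assoc)
  have hf: "h \<circ> f = f \<circ> g" unfolding h_def using gf fe ge by (simp add: comp_assoc)
  have fh: "f \<circ> h = f \<circ> g"
  proof -
    have "f \<circ> h = f \<circ> e \<circ> f \<circ> g \<circ> g" unfolding h_def using fe by (simp add: comp_assoc)
    also have "\<dots> = f \<circ> a \<circ> g \<circ> g" unfolding a_def by (simp add: comp_assoc)
    also have "\<dots> = f \<circ> e \<circ> g" using gi(2) by (simp add: comp_assoc)
    finally show ?thesis using fe by simp
  qed
  have P: "h \<in> L \<and> f \<circ> h \<circ> f = f \<and> h \<circ> f \<circ> h = h \<and> f \<circ> h = h \<circ> f"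
  proof (intro conjI)
    show "h \<in> L" by fact
    show "f \<circ> h \<circ> f = f" using fh gf fe by (simp add: comp_assoc)
    have "h \<circ> f \<circ> h = f \<circ> (g \<circ> f) \<circ> (g \<circ> g)" using hf unfolding h_def by (simp add: comp_assoc)
    then show "h \<circ> f \<circ> h = h" using gf fe unfolding h_def by (simp add: comp_assoc)
    show "f \<circ> h = h \<circ> f" using fh hf by simp
  qed
  have U: "k = h" if k: "k \<in> L \<and> f \<circ> k \<circ> f = f \<and> k \<circ> f \<circ> k = k \<and> f \<circ> k = k \<circ> f" for k
  proof -
    define p where "p = h \<circ> f"
    define q where "q = k \<circ> f"
    have "p = q \<circ> p"
    proof -
      have "p = f \<circ> h" unfolding p_def using P by simp
      also have "\<dots> = f \<circ> k \<circ> f \<circ> h" using k by (metis)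
      finally show ?thesis unfolding q_def p_def using k P by (simp add: comp_assoc)
    qed
    moreover have "q = q \<circ> p"
    proof -
      have fhf: "f \<circ> h \<circ> f = f" using P by blast
      have "q \<circ> p = k \<circ> (f \<circ> h \<circ> f)" unfolding q_def p_def by (simp add: comp_assoc)
      then show ?thesis unfolding q_def using fhf by simp
    qed
    ultimately have pq: "p = q" by simp
    have "h = p \<circ> h" unfolding p_def using P by simp
    also have "\<dots> = k \<circ> f \<circ> h" using pq unfolding q_def by simp
    also have "\<dots> = k \<circ> p" unfolding p_def using P by (simp add: comp_assoc)
    also have "\<dots> = k \<circ> (f \<circ> k)" using pq k unfolding q_def by simp
    also have "\<dots> = k \<circ> f \<circ> k" by (simp add: comp_assoc)
    also have "\<dots> = k" using k by blast
    finally show ?thesis by simp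
  qed
  have Lh: "Linv L f = h" unfolding Linv_def by (rule the_equality) (use P U in blast)+
  show ?thesis unfolding Lh by (rule P)
qed

lemma Lzero: assumes f: "f \<in> L"
  shows "Lzero L f \<in> L" "Lzero L f \<circ> Lzero L f = Lzero L f" "Lzero L f \<circ> f = f"
proof -
  define h where "h = Linv L f"
  have P: "h \<in> L" "f \<circ> h \<circ> f = f" "h \<circ> f \<circ> h = h" "f \<circ> h = h \<circ> f"
    using Linv[OF f] unfolding h_def by auto
  have z: "Lzero L f = h \<circ> f" unfolding Lzero_def h_def ..
  show "Lzero L f \<in> L" unfolding z using LL P(1) f by blast
  have "(h \<circ> f) \<circ> (h \<circ> f) = (h \<circ> f \<circ> h) \<circ> f" by (simp add: comp_assoc)
  then show "Lzero L f \<circ> Lzero L f = Lzero L f" unfolding z using P(3) by simp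
  have "(h \<circ> f) \<circ> f = (f \<circ> h) \<circ> f" using P(4) by simp
  then show "Lzero L f \<circ> f = f" unfolding z using P(2) by simp
qed
end


theorem mainTheorem7:
  fixes \<sigma> :: "'t::ab_group_add \<Rightarrow> 'x::t2_space \<Rightarrow> 'x"
    and \<pi> :: "'x \<Rightarrow> 'g::{topological_ab_group_add, t2_space}"
    and e f1 f2 :: "'x \<Rightarrow> 'x" and x :: 'x and \<xi> :: 'g
  assumes "compact (UNIV :: 'x set)"
    and "is_action \<sigma>" and "minimal_action \<sigma>" and "\<not> distal_action \<sigma>"
    and "is_MEF \<sigma> \<pi>"
    and "e \<in> ellis \<sigma>" and "minimal_idempotent (ellis \<sigma>) e"
    and "x \<in> range e"
    and "f1 \<in> Lset (ellis \<sigma>) e" and "f2 \<in> Lset (ellis \<sigma>) e"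
  shows "(regular_pt \<sigma> \<pi> \<xi> \<longrightarrow>
            ((f1, f2) \<in> Rev \<pi> (Lset (ellis \<sigma>) e) (\<xi> - \<pi> x) x \<longleftrightarrow>
               Ginv (ellis \<sigma>) e (e \<circ> f1) \<circ> f2 \<in> stabG (ellis \<sigma>) e x
               \<and> pi_tilde \<pi> f1 = \<xi> - \<pi> x \<and> pi_tilde \<pi> f2 = \<xi> - \<pi> x))
       \<and> ((\<forall>y. \<pi> y = \<xi> \<longrightarrow> separates_idempotents (Lset (ellis \<sigma>) e) y) \<longrightarrow>
            ((f1, f2) \<in> Rev \<pi> (Lset (ellis \<sigma>) e) (\<xi> - \<pi> x) x \<longleftrightarrow>
               Ginv (ellis \<sigma>) e (e \<circ> f1) \<circ> f2 \<in> stabG (ellis \<sigma>) e x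
               \<and> Lzero (Lset (ellis \<sigma>) e) f1 = Lzero (Lset (ellis \<sigma>) e) f2
               \<and> pi_tilde \<pi> f1 = \<xi> - \<pi> x \<and> pi_tilde \<pi> f2 = \<xi> - \<pi> x))"
proof -
  define E where "E = ellis \<sigma>"
  have act: "is_action \<sigma>" and mef: "is_MEF \<sigma> \<pi>" using assms by auto
  have idem: "e \<circ> e = e" using assms(7) unfolding minimal_idempotent_def by blast
  interpret ES E e
    by unfold_locales (use assms(6,7) ellis_comp[OF act] idem in \<open>auto simp: E_def\<close>)
  have ee: "\<And>z. e (e z) = e z" using idem by (metis comp_apply)
  have ex: "e x = x" using assms(8) idem by (metis comp_apply rangeE)
  have f1: "f1 \<in> L" and f2: "f2 \<in> L" using assms(9,10) unfolding E_def by auto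
  have pis: "\<And>f y. f \<in> E \<Longrightarrow> \<pi> (f y) = \<pi> y + pi_tilde \<pi> f"
    unfolding E_def using pi_shift[OF mef] by blast
  have pe: "\<pi> (e y) = \<pi> y" for y
  proof -
    have "\<pi> (e (e y)) = \<pi> y + pi_tilde \<pi> e + pi_tilde \<pi> e" using pis[OF eE] by (simp add: add.assoc)
    moreover have "\<pi> (e (e y)) = \<pi> y + pi_tilde \<pi> e" using idem pis[OF eE] by (metis comp_apply)
    ultimately have "pi_tilde \<pi> e = 0" by (metis add_cancel_right_right add.assoc)
    then show ?thesis using pis[OF eE] by simp
  qed
  define g where "g = Ginv E e (e \<circ> f1)"
  have aG: "e \<circ> f1 \<in> G" using e_L_G f1 .
  note gi = Ginv[OF aG, folded g_def]
  have gf1: "g \<circ> f1 = e"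
  proof -
    have "g \<circ> f1 = (g \<circ> e) \<circ> f1" using G_re gi(1) by simp
    then show ?thesis using gi(3) by (simp add: comp_assoc)
  qed
  have K1: "g \<circ> f2 \<in> stabG E e x" if "f1 x = f2 x"
  proof -
    have "g \<circ> f2 \<in> G" using GL gi(1) f2 .
    moreover have "(g \<circ> f2) x = x" using that gf1 ex by (metis comp_apply)
    ultimately show ?thesis unfolding stabG_def by simp
  qed
  have K2: "e (f1 x) = e (f2 x)" if "g \<circ> f2 \<in> stabG E e x"
  proof -
    have "g (f2 x) = x" using that unfolding stabG_def by auto
    then have "(e \<circ> f1 \<circ> g) (f2 x) = (e \<circ> f1) x" by simp
    moreover have "(e \<circ> f1 \<circ> g) (f2 x) = e (f2 x)" using gi(2) by simp
    ultimately show ?thesis by simp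
  qed
  have fib: "\<pi> (f x) = \<xi>" if "f \<in> L" "pi_tilde \<pi> f = \<xi> - \<pi> x" for f
    using pis[OF L_sub[OF that(1)]] that(2) by simp
  have part1: "f1 x = f2 x"
    if reg: "regular_pt \<sigma> \<pi> \<xi>" and st: "g \<circ> f2 \<in> stabG E e x"
      and p1: "pi_tilde \<pi> f1 = \<xi> - \<pi> x" and p2: "pi_tilde \<pi> f2 = \<xi> - \<pi> x"
  proof -
    have fix_e: "e (f x) = f x" if "f \<in> L" "pi_tilde \<pi> f = \<xi> - \<pi> x" for f
    proof (rule ccontr)
      assume ne: "e (f x) \<noteq> f x"
      have "proximal \<sigma> (e (f x)) (f x)" unfolding proximal_def
        using assms(6) ee by blast
      moreover have "\<pi> (e (f x)) = \<xi>" "\<pi> (f x) = \<xi>" using pe fib[OF that] by auto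
      ultimately have "singular_pt \<sigma> \<pi> \<xi>" unfolding singular_pt_def using ne by blast
      then show False using reg unfolding regular_pt_def by blast
    qed
    have a: "e (f1 x) = f1 x" using fix_e[OF f1 p1] .
    have b: "e (f2 x) = f2 x" using fix_e[OF f2 p2] .
    have c: "e (f1 x) = e (f2 x)" using K2[OF st] .
    show ?thesis by (rule trans[OF trans[OF a[symmetric] c] b])
  qed
  have part2a: "Lzero L f1 = Lzero L f2"
    if sep: "\<forall>y. \<pi> y = \<xi> \<longrightarrow> separates_idempotents L y"
      and eq: "f1 x = f2 x" and p1: "pi_tilde \<pi> f1 = \<xi> - \<pi> x"
  proof -
    have s: "separates_idempotents L (f1 x)" using sep fib[OF f1 p1] by blast
    have u1: "Lzero L f1 (f1 x) = f1 x" using Lzero(3)[OF f1] by (metis comp_apply)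
    have u2: "Lzero L f2 (f1 x) = f1 x" using Lzero(3)[OF f2] eq by (metis comp_apply)
    have m1: "Lzero L f1 \<in> {u \<in> L. u \<circ> u = u}" using Lzero[OF f1] by simp
    have m2: "Lzero L f2 \<in> {u \<in> L. u \<circ> u = u}" using Lzero[OF f2] by simp
    show ?thesis using inj_onD[OF s[unfolded separates_idempotents_def] _ m1 m2] u1 u2 by simp
  qed
  have part2b: "f1 x = f2 x" if z: "Lzero L f1 = Lzero L f2" and st: "g \<circ> f2 \<in> stabG E e x"
  proof -
    define u where "u = Lzero L f1"
    have ue: "u \<circ> e = u" unfolding u_def using L_re Lzero(1)[OF f1] by blast
    have a: "u (f1 x) = f1 x" unfolding u_def using Lzero(3)[OF f1] by (metis comp_apply)
    have b: "u (f2 x) = f2 x" unfolding u_def z using Lzero(3)[OF f2] by (metis comp_apply)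
    have "u (f1 x) = u (e (f1 x))" using ue by (metis comp_apply)
    also have "\<dots> = u (e (f2 x))" using K2[OF st] by simp
    also have "\<dots> = u (f2 x)" using ue by (metis comp_apply)
    finally show ?thesis using a b by simp
  qed
  have R: "(f1, f2) \<in> Rev \<pi> L (\<xi> - \<pi> x) x \<longleftrightarrow>
      f1 x = f2 x \<and> pi_tilde \<pi> f1 = \<xi> - \<pi> x \<and> pi_tilde \<pi> f2 = \<xi> - \<pi> x"
    unfolding Rev_def using f1 f2 by blast
  show ?thesis
    unfolding E_def[symmetric] unfolding g_def[symmetric] R
    using K1 part1 part2a part2b by blast
qed

end
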